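(* Let $k\ge 2$ and let $G$ be a $k$-uniform hypergraph on $n\ge 2$ vertices whose degrees, listed in non-increasing order, are $d_1\ge d_2\ge\cdots\ge d_n$. Put $\Delta=d_1$ (maximum degree) and $\Delta'=d_2$ (second maximum degree), and assume $\Delta'\ge 1$. Let $0\le\alpha<1$ and \[h(t)=(1-\alpha)\Delta' t^{k}+\alpha(\Delta'-\Delta)t^{k-1}-(1-\alpha)\Delta .\] Define $\delta$ as follows: if $\alpha=0$, let $\delta=(\Delta/\Delta')^{1/k}$; if $0<\alpha<1$ and $\Delta=\Delta'$, let $\delta=1$; if $0<\alpha<1$ and $\Delta>\Delta'$, let $\delta$ be any root of $h(t)=0$ in the interval $((\Delta/\Delta')^{1/k},+\infty)$ (such a root exists). Then \[\rho_\alpha(G)\le \alpha\Delta+(1-\alpha)\Delta\,\delta^{-(k-1)}.\] Moreover, if $G$ is connected, equality holds if and only if either $G$ is regular, or $G\cong G'$, where $H$ is a regular $(k-1)$-uniform hypergraph on $n-1$ vertices, $v\notin V(H)$, $V(G')=V(H)\cup\{v\}$ and $E(G')=\{e\cup\{v\}: e\in E(H)\}$.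
   Context: Hypergraphs are finite, with edges being sets (no repeated edges). A hypergraph is $k$-uniform if every edge has exactly $k$ vertices. The degree $d_v$ of a vertex $v$ is the number of edges containing $v$; $G$ is regular if all vertices have the same degree. For a $k$-uniform hypergraph $G$ with vertex set $\{1,\dots,n\}$, the adjacency tensor $\mathcal A(G)$ is the order-$k$, dimension-$n$ tensor whose $(i_1,\dots,i_k)$-entry is $\frac{1}{(k-1)!}$ if $\{i_1,\dots,i_k\}\in E(G)$ and $0$ otherwise; $\mathcal D(G)$ is the diagonal order-$k$ tensor with $(i,\dots,i)$-entry $d_i$. For $0\le\alpha<1$, $\mathcal A_\alpha(G)=\alpha\mathcal D(G)+(1-\alpha)\mathcal A(G)$. For an order-$k$, dimension-$n$ tensor $\mathcal T$ and $x\in\mathbb C^n$, $(\mathcal Tx)_i=\sum_{i_2,\dots,i_k=1}^n\mathcal T_{ii_2\dots i_k}x_{i_2}\cdots x_{i_k}$; $\lambda\in\mathbb C$ is an eigenvalue of $\mathcal T$ if $\mathcal Tx=\lambda x^{[k-1]}$ for some nonzero $x$, where $x^{[k-1]}=(x_1^{k-1},\dots,x_n^{k-1})^\top$. The $\alpha$-spectral radius $\rho_\alpha(G)$ is the largest modulus of the eigenvalues of $\mathcal A_\alpha(G)$. A walk is an alternating sequence $(v_0,e_1,v_1,\dots,e_s,v_s)$ of vertices and edges with $v_{i-1},v_i\in e_i$ and $v_{i-1}\ne v_i$; a path is a walk with all vertices distinct and all edges distinct; $G$ is connected if any two vertices are joined by a path. *)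

theory Defs
  imports Complex_Main
begin

definition uniform_hypergraph :: "'a set \<Rightarrow> 'a set set \<Rightarrow> nat \<Rightarrow> bool" where
  "uniform_hypergraph V E k \<longleftrightarrow> finite V \<and> (\<forall>e\<in>E. e \<subseteq> V \<and> card e = k)"

definition hdeg :: "'a set set \<Rightarrow> 'a \<Rightarrow> nat" where
  "hdeg E v = card {e \<in> E. v \<in> e}"

definition hregular :: "'a set \<Rightarrow> 'a set set \<Rightarrow> bool" where
  "hregular V E \<longleftrightarrow> (\<forall>u\<in>V. \<forall>w\<in>V. hdeg E u = hdeg E w)"

definition hwalk :: "'a set set \<Rightarrow> 'a list \<Rightarrow> 'a set list \<Rightarrow> bool" where
  "hwalk E vs es \<longleftrightarrow> length vs = length es + 1 \<and>
     (\<forall>i<length es. es ! i \<in> E \<and> vs ! i \<in> es ! i \<and> vs ! Suc i \<in> es ! i \<and> vs ! i \<noteq> vs ! Suc i)"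

definition hpath :: "'a set set \<Rightarrow> 'a list \<Rightarrow> 'a set list \<Rightarrow> bool" where
  "hpath E vs es \<longleftrightarrow> hwalk E vs es \<and> distinct vs \<and> distinct es"

definition hconnected :: "'a set \<Rightarrow> 'a set set \<Rightarrow> bool" where
  "hconnected V E \<longleftrightarrow> (\<forall>u\<in>V. \<forall>w\<in>V. \<exists>vs es. hpath E vs es \<and> hd vs = u \<and> last vs = w)"

definition hyp_iso :: "'a set \<Rightarrow> 'a set set \<Rightarrow> 'b set \<Rightarrow> 'b set set \<Rightarrow> bool" where
  "hyp_iso V1 E1 V2 E2 \<longleftrightarrow> (\<exists>f. bij_betw f V1 V2 \<and> E2 = (\<lambda>e. f ` e) ` E1)"

text \<open>Tensors of order k and dimension n: functions on index lists (entries with indices in {0..<n}).\<close>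

definition tensor_apply :: "nat \<Rightarrow> nat \<Rightarrow> (nat list \<Rightarrow> complex) \<Rightarrow> (nat \<Rightarrow> complex) \<Rightarrow> nat \<Rightarrow> complex" where
  "tensor_apply n k T x i =
     (\<Sum>is\<in>{is. length is = k - 1 \<and> set is \<subseteq> {..<n}}. T (i # is) * prod_list (map x is))"

definition tensor_eigenvalue :: "nat \<Rightarrow> nat \<Rightarrow> (nat list \<Rightarrow> complex) \<Rightarrow> complex \<Rightarrow> bool" where
  "tensor_eigenvalue n k T lam \<longleftrightarrow>
     (\<exists>x :: nat \<Rightarrow> complex. (\<exists>i<n. x i \<noteq> 0) \<and>
        (\<forall>i<n. tensor_apply n k T x i = lam * x i ^ (k - 1)))"

definition tensor_spectral_radius :: "nat \<Rightarrow> nat \<Rightarrow> (nat list \<Rightarrow> complex) \<Rightarrow> real" where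
  "tensor_spectral_radius n k T = Sup {cmod lam | lam. tensor_eigenvalue n k T lam}"

definition adj_tensor :: "nat \<Rightarrow> nat set set \<Rightarrow> nat list \<Rightarrow> real" where
  "adj_tensor k E is = (if set is \<in> E then 1 / fact (k - 1) else 0)"

definition deg_tensor :: "nat set set \<Rightarrow> nat list \<Rightarrow> real" where
  "deg_tensor E is = (if (\<forall>j\<in>set is. j = hd is) then real (hdeg E (hd is)) else 0)"

definition A_alpha :: "real \<Rightarrow> nat \<Rightarrow> nat set set \<Rightarrow> nat list \<Rightarrow> complex" where
  "A_alpha \<alpha> k E is = complex_of_real (\<alpha> * deg_tensor E is + (1 - \<alpha>) * adj_tensor k E is)"

definition rho_alpha :: "real \<Rightarrow> nat \<Rightarrow> nat \<Rightarrow> nat set set \<Rightarrow> real" where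
  "rho_alpha \<alpha> n k E = tensor_spectral_radius n k (A_alpha \<alpha> k E)"

text \<open>Degrees in non-increasing order d_1 \<ge> ... \<ge> d_n (0-indexed list).\<close>
definition sorted_degrees :: "nat \<Rightarrow> nat set set \<Rightarrow> nat list" where
  "sorted_degrees n E = rev (sort (map (hdeg E) [0..<n]))"

definition hpoly :: "real \<Rightarrow> nat \<Rightarrow> real \<Rightarrow> real \<Rightarrow> real \<Rightarrow> real" where
  "hpoly \<alpha> k D D' t = (1 - \<alpha>) * D' * t ^ k + \<alpha> * (D' - D) * t ^ (k - 1) - (1 - \<alpha>) * D"

end

theory Submission
  imports Defs "HOL-Combinatorics.Multiset_Permutations" "HOL-Combinatorics.List_Permutation" "HOL-Analysis.Analysis" "Jordan_Normal_Form.Spectral_Radius"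
begin


lemma unif_fin:
  fixes E :: "nat set set"
  assumes "uniform_hypergraph {0..<n} E k"
  shows "finite E" "\<And>e. e \<in> E \<Longrightarrow> e \<subseteq> {0..<n}" "\<And>e. e \<in> E \<Longrightarrow> card e = k"
    "\<And>e. e \<in> E \<Longrightarrow> finite e"
proof -
  have "E \<subseteq> Pow {0..<n}" using assms unfolding uniform_hypergraph_def by auto
  thus "finite E" by (meson finite_Pow_iff finite_atLeastLessThan finite_subset)
  show "\<And>e. e \<in> E \<Longrightarrow> e \<subseteq> {0..<n}" "\<And>e. e \<in> E \<Longrightarrow> card e = k"
    using assms unfolding uniform_hypergraph_def by auto
  show "\<And>e. e \<in> E \<Longrightarrow> finite e" using assms unfolding uniform_hypergraph_def
    by (meson finite_atLeastLessThan finite_subset)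
qed

lemma tensor_apply_A:
  assumes k: "k \<ge> 2" and G: "uniform_hypergraph {0..<n} E k" and i: "i < n"
  shows "tensor_apply n k (A_alpha \<alpha> k E) x i =
     of_real (\<alpha> * real (hdeg E i)) * x i ^ (k-1)
     + of_real (1-\<alpha>) * (\<Sum>e\<in>{e\<in>E. i\<in>e}. \<Prod>j\<in>e-{i}. x j)"
proof -
  define L where "L = {is. length is = k - 1 \<and> set is \<subseteq> {..<n}}"
  have finL: "finite L" unfolding L_def
    using finite_lists_length_eq[of "{..<n}" "k-1"] by (simp add: conj_commute)
  have split: "A_alpha \<alpha> k E (i # is) * prod_list (map x is) =
      of_real \<alpha> * (of_real (deg_tensor E (i # is)) * prod_list (map x is))
      + of_real (1-\<alpha>) * (of_real (adj_tensor k E (i # is)) * prod_list (map x is))" for "is"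
    unfolding A_alpha_def by (simp add: algebra_simps)
  have deg: "(\<Sum>is\<in>L. of_real (deg_tensor E (i # is)) * prod_list (map x is))
      = of_real (real (hdeg E i)) * x i ^ (k-1)"
  proof -
    have "(\<Sum>is\<in>L. of_real (deg_tensor E (i # is)) * prod_list (map x is))
        = (\<Sum>is\<in>L. if is = replicate (k-1) i then of_real (real (hdeg E i)) * x i ^ (k-1) else 0)"
    proof (rule sum.cong[OF refl])
      fix "is" assume "is \<in> L"
      hence len: "length is = k - 1" unfolding L_def by auto
      show "of_real (deg_tensor E (i # is)) * prod_list (map x is) =
        (if is = replicate (k-1) i then of_real (real (hdeg E i)) * x i ^ (k-1) else 0)"
      proof (cases "\<forall>j\<in>set is. j = i")
        case True
        hence "is = replicate (k-1) i" using replicate_length_same[OF True] len by simp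
        thus ?thesis by (simp add: deg_tensor_def prod_list_replicate)
      next
        case False
        hence "is \<noteq> replicate (k-1) i" by auto
        thus ?thesis using False by (auto simp add: deg_tensor_def)
      qed
    qed
    also have "\<dots> = of_real (real (hdeg E i)) * x i ^ (k-1)"
    proof -
      have "replicate (k-1) i \<in> L" unfolding L_def using i by auto
      thus ?thesis using finL by (simp add: sum.delta')
    qed
    finally show ?thesis .
  qed
  define Ei where "Ei = {e\<in>E. i\<in>e}"
  have finE: "finite E" and sub: "\<And>e. e \<in> E \<Longrightarrow> e \<subseteq> {0..<n}" and ck: "\<And>e. e \<in> E \<Longrightarrow> card e = k"
    and fe: "\<And>e. e \<in> E \<Longrightarrow> finite e"
    using unif_fin[OF G] by auto
  have finEi: "finite Ei" unfolding Ei_def using finE by auto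
  have setEq: "{is\<in>L. set (i # is) \<in> E} = (\<Union>e\<in>Ei. permutations_of_set (e - {i}))"
  proof (intro equalityI subsetI)
    fix "is" assume "is \<in> {is\<in>L. set (i # is) \<in> E}"
    hence len: "length is = k - 1" and eE: "insert i (set is) \<in> E" unfolding L_def by auto
    have "card (insert i (set is)) = k" using ck[OF eE] .
    moreover have "card (insert i (set is)) \<le> Suc (card (set is))" by (simp add: card_insert_le_m1)
    moreover have "card (set is) \<le> length is" by (rule card_length)
    ultimately have ni: "i \<notin> set is" and cs: "card (set is) = length is"
      using len k by (auto simp: card_insert_if split: if_splits)
    hence "distinct is" by (simp add: card_distinct)
    moreover have "set is = insert i (set is) - {i}" using ni by auto
    ultimately show "is \<in> (\<Union>e\<in>Ei. permutations_of_set (e - {i}))"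
      unfolding Ei_def permutations_of_set_def using eE by blast
  next
    fix "is" assume "is \<in> (\<Union>e\<in>Ei. permutations_of_set (e - {i}))"
    then obtain e where e: "e \<in> E" "i \<in> e" and s: "set is = e - {i}" and d: "distinct is"
      unfolding Ei_def permutations_of_set_def by auto
    have "length is = card (e - {i})" using d s by (metis distinct_card)
    also have "\<dots> = k - 1" using ck[OF e(1)] e(2) fe[OF e(1)] by simp
    finally have "length is = k - 1" .
    moreover have "set is \<subseteq> {..<n}" using s sub[OF e(1)] by auto
    moreover have "set (i # is) = e" using s e(2) by auto
    ultimately show "is \<in> {is\<in>L. set (i # is) \<in> E}" unfolding L_def using e by auto
  qed
  have adj: "(\<Sum>is\<in>L. of_real (adj_tensor k E (i # is)) * prod_list (map x is))
      = (\<Sum>e\<in>Ei. \<Prod>j\<in>e-{i}. x j)"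
  proof -
    define c where "c = (of_real (1 / fact (k-1)) :: complex)"
    have ca: "of_real (adj_tensor k E l) = (if set l \<in> E then c else 0)" for l
      by (simp add: adj_tensor_def c_def)
    have "(\<Sum>is\<in>L. of_real (adj_tensor k E (i # is)) * prod_list (map x is))
        = (\<Sum>is\<in>L. if set (i # is) \<in> E then c * prod_list (map x is) else 0)"
      by (rule sum.cong[OF refl]) (simp add: ca)
    also have "\<dots> = (\<Sum>is\<in>{is\<in>L. set (i # is) \<in> E}. c * prod_list (map x is))"
      using finL by (simp add: sum.inter_filter)
    also have "\<dots> = (\<Sum>e\<in>Ei. \<Sum>is\<in>permutations_of_set (e - {i}). c * prod_list (map x is))"
      unfolding setEq
    proof (rule sum.UNION_disjoint[OF finEi])
      show "\<forall>e\<in>Ei. finite (permutations_of_set (e - {i}))" by simp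
      show "\<forall>e\<in>Ei. \<forall>e'\<in>Ei. e \<noteq> e' \<longrightarrow> permutations_of_set (e - {i}) \<inter> permutations_of_set (e' - {i}) = {}"
        unfolding Ei_def permutations_of_set_def by blast
    qed
    also have "\<dots> = (\<Sum>e\<in>Ei. \<Prod>j\<in>e-{i}. x j)"
    proof (rule sum.cong[OF refl])
      fix e assume e: "e \<in> Ei"
      hence eE: "e \<in> E" and ie: "i \<in> e" unfolding Ei_def by auto
      have "(\<Sum>is\<in>permutations_of_set (e - {i}). c * prod_list (map x is))
          = (\<Sum>is\<in>permutations_of_set (e - {i}). c * (\<Prod>j\<in>e-{i}. x j))"
        by (rule sum.cong[OF refl]) (auto simp: permutations_of_set_def prod.distinct_set_conv_list[symmetric])
      also have "\<dots> = of_nat (fact (k-1)) * c * (\<Prod>j\<in>e-{i}. x j)"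
        using ck[OF eE] fe[OF eE] ie by simp
      also have "\<dots> = (\<Prod>j\<in>e-{i}. x j)"
      proof -
        have "of_nat (fact (k-1)) * c = (1::complex)"
          unfolding c_def by (simp add: field_simps)
        thus ?thesis by simp
      qed
      finally show "(\<Sum>is\<in>permutations_of_set (e - {i}). c * prod_list (map x is)) = (\<Prod>j\<in>e-{i}. x j)" .
    qed
    finally show ?thesis .
  qed
  show ?thesis
    unfolding tensor_apply_def L_def[symmetric] split sum.distrib sum_distrib_left[symmetric] deg adj Ei_def[symmetric]
    by simp
qed


lemma sorted_second:
  fixes xs :: "nat list"
  assumes len: "length xs \<ge> 2"
  defines "L \<equiv> rev (sort xs)"
  shows "\<exists>p q. p < length xs \<and> q < length xs \<and> p \<noteq> q \<and> xs!p = L!0 \<and> xs!q = L!1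
     \<and> (\<forall>i<length xs. xs!i \<le> L!0) \<and> (\<forall>i<length xs. i \<noteq> p \<longrightarrow> xs!i \<le> L!1)"
proof -
  have "mset L = mset xs" unfolding L_def by simp
  then obtain \<pi> where pi: "\<pi> permutes {..<length xs}" and pl: "permute_list \<pi> xs = L"
    by (metis mset_eq_permutation)
  have lenL: "length L = length xs" unfolding L_def by simp
  have Lnth: "L ! j = xs ! (\<pi> j)" if "j < length xs" for j
    using pl permute_list_nth[OF pi that] by simp
  have mono: "L ! j \<le> L ! i" if "i \<le> j" "j < length xs" for i j
  proof -
    have s: "sorted (sort xs)" by simp
    have "L ! j = sort xs ! (length xs - Suc j)" "L ! i = sort xs ! (length xs - Suc i)"
      unfolding L_def using that by (auto simp: rev_nth)
    thus ?thesis using sorted_nth_mono[OF s, of "length xs - Suc j" "length xs - Suc i"] that by simp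
  qed
  have inv: "\<exists>j<length xs. \<pi> j = i" if "i < length xs" for i
  proof -
    have "i \<in> \<pi> ` {..<length xs}" using permutes_image[OF pi] that by simp
    thus ?thesis by auto
  qed
  have pin: "\<pi> j < length xs" if "j < length xs" for j
    using permutes_in_image[OF pi] that by simp
  show ?thesis
  proof (intro exI conjI allI impI)
    show "\<pi> 0 < length xs" "\<pi> 1 < length xs" using pin[of 0] pin[of 1] len by (auto simp del: length_greater_0_conv)
    show "\<pi> 0 \<noteq> \<pi> 1" using permutes_inj[OF pi] by (metis inj_eq zero_neq_one)
    show "xs ! \<pi> 0 = L ! 0" "xs ! \<pi> 1 = L ! 1" using Lnth[of 0] Lnth[of 1] len by (auto simp del: length_greater_0_conv)
  next
    fix i assume i: "i < length xs"
    then obtain j where j: "j < length xs" "\<pi> j = i" using inv by blast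
    show "xs ! i \<le> L ! 0" using mono[of 0 j] j Lnth by auto
  next
    fix i assume i: "i < length xs" and ne: "i \<noteq> \<pi> 0"
    then obtain j where j: "j < length xs" "\<pi> j = i" using inv by blast
    hence "j \<noteq> 0" using ne by (metis)
    thus "xs ! i \<le> L ! 1" using mono[of 1 j] j Lnth by auto
  qed
qed

lemma degree_facts:
  assumes n: "n \<ge> 2"
  shows "\<exists>p q. p < n \<and> q < n \<and> p \<noteq> q \<and> hdeg E p = sorted_degrees n E ! 0
     \<and> hdeg E q = sorted_degrees n E ! 1
     \<and> (\<forall>i<n. hdeg E i \<le> sorted_degrees n E ! 0) \<and> (\<forall>i<n. i \<noteq> p \<longrightarrow> hdeg E i \<le> sorted_degrees n E ! 1)"
  using sorted_second[of "map (hdeg E) [0..<n]"] n unfolding sorted_degrees_def by auto blast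


lemma sum_eq_le_imp_eq:
  fixes f g :: "'a \<Rightarrow> real"
  assumes "finite A" "\<And>x. x \<in> A \<Longrightarrow> f x \<le> g x" "sum f A = sum g A" "x \<in> A"
  shows "f x = g x"
proof (rule ccontr)
  assume "f x \<noteq> g x"
  hence "f x < g x" using assms(2)[OF assms(4)] by auto
  hence "sum f A < sum g A" using sum_strict_mono_ex1[of A f g] assms by auto
  thus False using assms(3) by simp
qed

lemma prod_eq_le_imp_eq:
  fixes f g :: "'a \<Rightarrow> real"
  assumes "finite A" "\<And>x. x \<in> A \<Longrightarrow> 0 \<le> f x \<and> f x \<le> g x" "\<And>x. x \<in> A \<Longrightarrow> 0 < g x"
    "prod f A = prod g A" "x \<in> A"
  shows "f x = g x"
proof (rule ccontr)
  assume "f x \<noteq> g x"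
  hence "f x < g x" using assms(2)[OF assms(5)] by auto
  hence "prod f A < prod g A" using prod_mono_strict[of x A f g] assms by auto
  thus False using assms(4) by simp
qed

locale hsetup =
  fixes n k :: nat and E :: "nat set set" and \<alpha> D D' \<delta> :: real and w :: nat
  assumes k2: "k \<ge> 2" and G: "uniform_hypergraph {0..<n} E k"
   and a0: "0 \<le> \<alpha>" and a1: "\<alpha> < 1" and wn: "w < n" and dw: "real (hdeg E w) = D"
   and dle: "\<And>i. i < n \<Longrightarrow> i \<noteq> w \<Longrightarrow> real (hdeg E i) \<le> D'" and D'1: "D' \<ge> 1"
   and d1: "\<delta> \<ge> 1" and DD: "D' \<le> D" and key: "\<alpha>*D + (1-\<alpha>)*D/\<delta>^(k-1) = \<alpha>*D' + (1-\<alpha>)*D'*\<delta>"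
begin

definition "B = \<alpha>*D + (1-\<alpha>)*D/\<delta>^(k-1)"
definition "s j = (if j = w then \<delta> else 1)"
definition "T i = (\<Sum>e\<in>{e\<in>E. i\<in>e}. \<Prod>j\<in>e-{i}. s j)"
definition "R i = \<alpha> * real (hdeg E i) + (1-\<alpha>) * T i / s i^(k-1)"

lemma finE: "finite E" and esub: "\<And>e. e \<in> E \<Longrightarrow> e \<subseteq> {0..<n}" and ecard: "\<And>e. e \<in> E \<Longrightarrow> card e = k"
    and efin: "\<And>e. e \<in> E \<Longrightarrow> finite e"
  using unif_fin[OF G] by auto

lemma s_pos: "s j > 0" and s_ge1: "s j \<ge> 1" using d1 by (auto simp: s_def)

lemma hdeg_card: "hdeg E i = card {e\<in>E. i\<in>e}" by (simp add: hdeg_def)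

lemma T_w: "T w = D"
proof -
  have "T w = (\<Sum>e\<in>{e\<in>E. w\<in>e}. 1)" unfolding T_def
    by (rule sum.cong[OF refl], rule prod.neutral) (auto simp: s_def)
  thus ?thesis using dw by (simp add: hdeg_def)
qed

lemma T_other: "i \<noteq> w \<Longrightarrow> T i = (\<Sum>e\<in>{e\<in>E. i\<in>e}. if w \<in> e then \<delta> else 1)"
  unfolding T_def
proof (rule sum.cong[OF refl])
  fix e assume "i \<noteq> w" "e \<in> {e\<in>E. i\<in>e}"
  hence fe: "finite (e - {i})" using efin by auto
  have "(\<Prod>j\<in>e-{i}. s j) = (\<Prod>j\<in>e-{i}. if j = w then \<delta> else 1)" by (simp add: s_def)
  also have "\<dots> = (if w \<in> e - {i} then \<delta> else 1)" using prod.delta[OF fe, of w "\<lambda>_. \<delta>"] by simp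
  finally show "(\<Prod>j\<in>e-{i}. s j) = (if w \<in> e then \<delta> else 1)" using \<open>i \<noteq> w\<close> by simp
qed

lemma R_w: "R w = B" unfolding R_def B_def T_w using dw by (simp add: s_def)

lemma R_other:
  assumes i: "i < n" "i \<noteq> w"
  shows "R i \<le> B" and "R i = B \<Longrightarrow> \<delta> > 1 \<Longrightarrow> real (hdeg E i) = D' \<and> (\<forall>e\<in>E. i \<in> e \<longrightarrow> w \<in> e)"
    and "R i = B \<Longrightarrow> \<delta> = 1 \<Longrightarrow> real (hdeg E i) = D"
proof -
  let ?d = "real (hdeg E i)"
  have fin: "finite {e\<in>E. i\<in>e}" using finE by simp
  have Tle: "T i \<le> ?d * \<delta>"
  proof -
    have "T i \<le> (\<Sum>e\<in>{e\<in>E. i\<in>e}. \<delta>)" unfolding T_other[OF i(2)]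
      by (rule sum_mono) (use d1 in auto)
    thus ?thesis by (simp add: hdeg_def)
  qed
  have Ri: "R i = \<alpha> * ?d + (1-\<alpha>) * T i" unfolding R_def using i by (simp add: s_def)
  have BD': "B = \<alpha>*D' + (1-\<alpha>)*D'*\<delta>" unfolding B_def using key .
  have dD: "?d \<le> D'" using dle i by auto
  have step1: "\<alpha> * ?d + (1-\<alpha>) * T i \<le> \<alpha> * ?d + (1-\<alpha>) * (?d * \<delta>)"
    using Tle a1 by (simp add: mult_left_mono)
  have step2: "\<alpha> * ?d + (1-\<alpha>) * (?d * \<delta>) \<le> B" unfolding BD'
  proof -
    have "\<alpha> * ?d \<le> \<alpha> * D'" using dD a0 by (simp add: mult_left_mono)
    moreover have "(1-\<alpha>) * (?d * \<delta>) \<le> (1-\<alpha>)*D'*\<delta>" using dD a1 d1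
      by (simp add: mult_left_mono mult_right_mono mult.assoc)
    ultimately show "\<alpha> * ?d + (1-\<alpha>) * (?d * \<delta>) \<le> \<alpha>*D' + (1-\<alpha>)*D'*\<delta>" by simp
  qed
  show "R i \<le> B" using Ri step1 step2 by simp
  assume RB: "R i = B"
  hence e1: "T i = ?d * \<delta>" and e2: "\<alpha> * ?d + (1-\<alpha>) * (?d * \<delta>) = B"
    using Ri step1 step2 a1 by (auto simp: mult_le_cancel_left)
  from e2 have e2': "(\<alpha> + (1-\<alpha>)*\<delta>) * (D' - ?d) = 0" unfolding BD' by (simp add: algebra_simps)
  have "(1-\<alpha>)*\<delta> > 0" using a1 d1 by simp
  hence pos: "\<alpha> + (1-\<alpha>)*\<delta> > 0" using a0 by linarith
  hence dEq: "?d = D'" using e2' by simp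
  show "\<delta> > 1 \<Longrightarrow> ?d = D' \<and> (\<forall>e\<in>E. i \<in> e \<longrightarrow> w \<in> e)"
  proof (intro conjI dEq ballI impI)
    fix e assume dg: "\<delta> > 1" and e: "e \<in> E" "i \<in> e"
    have "(\<Sum>e\<in>{e\<in>E. i\<in>e}. if w \<in> e then \<delta> else 1) = (\<Sum>e\<in>{e\<in>E. i\<in>e}. \<delta>)"
      using e1 T_other[OF i(2)] by (simp add: hdeg_def)
    hence "(if w \<in> e then \<delta> else 1) = \<delta>"
      by (rule sum_eq_le_imp_eq[OF fin, rotated]) (use d1 e in auto)
    thus "w \<in> e" using dg by (auto split: if_splits)
  qed
  assume "\<delta> = 1"
  hence "D = D'" using key by (simp add: algebra_simps)
  thus "?d = D" using dEq by simp
qed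

lemma R_le: "i < n \<Longrightarrow> R i \<le> B" using R_w R_other(1) by (cases "i = w") auto

end


context hsetup begin

lemma elt_lt: "e \<in> E \<Longrightarrow> j \<in> e \<Longrightarrow> j < n" using esub by fastforce

lemma eig_eq:
  assumes ev: "\<And>i. i < n \<Longrightarrow> tensor_apply n k (A_alpha \<alpha> k E) x i = lam * x i ^ (k-1)" and i: "i < n"
  shows "(lam - of_real (\<alpha> * real (hdeg E i))) * x i ^ (k-1)
          = of_real (1-\<alpha>) * (\<Sum>e\<in>{e\<in>E. i\<in>e}. \<Prod>j\<in>e-{i}. x j)"
  using ev[OF i] tensor_apply_A[OF k2 G i, of \<alpha> x] by (simp add: algebra_simps)

lemma gersh_point:
  fixes x :: "nat \<Rightarrow> complex" and M :: real
  assumes ev: "\<And>i. i < n \<Longrightarrow> tensor_apply n k (A_alpha \<alpha> k E) x i = lam * x i ^ (k-1)"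
    and Mpos: "M > 0" and Mmax: "\<And>j. j < n \<Longrightarrow> cmod (x j) \<le> s j * M"
    and i: "i < n" and xi: "cmod (x i) = s i * M"
  shows "cmod lam \<le> R i"
    and "cmod lam = B \<Longrightarrow> R i = B \<and> (\<forall>e\<in>E. i \<in> e \<longrightarrow> (\<forall>j\<in>e. cmod (x j) = s j * M))"
proof -
  let ?d = "real (hdeg E i)"
  let ?Ei = "{e\<in>E. i\<in>e}"
  define X where "X = (\<Sum>e\<in>?Ei. \<Prod>j\<in>e-{i}. cmod (x j))"
  have finEi: "finite ?Ei" using finE by simp
  have c: "(s i * M)^(k-1) > 0" using s_pos Mpos by simp
  have n1: "cmod (1 - complex_of_real \<alpha>) = 1 - \<alpha>"
    by (metis a1 abs_of_pos diff_gt_0_iff_gt norm_of_real of_real_1 of_real_diff)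
  have eq: "cmod (lam - of_real ?d * of_real \<alpha>) * (s i * M)^(k-1)
        = (1-\<alpha>) * cmod (\<Sum>e\<in>?Ei. \<Prod>j\<in>e-{i}. x j)"
    using arg_cong[OF eig_eq[OF ev i], of cmod] xi a1 n1 by (simp add: norm_mult norm_power mult.commute)
  have "cmod (\<Sum>e\<in>?Ei. \<Prod>j\<in>e-{i}. x j) \<le> X" unfolding X_def
    by (rule order_trans[OF norm_sum]) (simp add: prod_norm[symmetric])
  hence A: "cmod (lam - of_real ?d * of_real \<alpha>) \<le> (1-\<alpha>) * X / (s i * M)^(k-1)"
    using eq c a1 by (simp add: pos_le_divide_eq mult_left_mono)
  have tri: "cmod lam \<le> \<alpha> * ?d + cmod (lam - of_real ?d * of_real \<alpha>)"
  proof -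
    have "cmod lam \<le> cmod (of_real (?d * \<alpha>) :: complex) + cmod (lam - of_real ?d * of_real \<alpha>)"
      using norm_triangle_ineq[of "of_real (?d * \<alpha>)" "lam - of_real ?d * of_real \<alpha>"] by simp
    moreover have "cmod (complex_of_real \<alpha> * complex_of_nat (hdeg E i)) = \<alpha> * ?d"
      using a0 by (simp add: norm_mult)
    ultimately show ?thesis using a0 by (simp add: abs_mult mult.commute)
  qed
  have term_le: "(\<Prod>j\<in>e-{i}. cmod (x j)) \<le> (\<Prod>j\<in>e-{i}. s j * M)" if e: "e \<in> ?Ei" for e
    by (rule prod_mono) (use Mmax esub e in force)
  have term_eq: "(\<Prod>j\<in>e-{i}. s j * M) = (\<Prod>j\<in>e-{i}. s j) * M^(k-1)" if e: "e \<in> ?Ei" for e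
  proof -
    have "card (e - {i}) = k - 1" using e ecard efin by auto
    thus ?thesis by (simp add: prod.distrib)
  qed
  have C: "X \<le> M^(k-1) * T i" unfolding X_def T_def sum_distrib_left
  proof (rule sum_mono)
    fix e assume e: "e \<in> ?Ei"
    have "M^(k-1) * (\<Prod>j\<in>e-{i}. s j) = (\<Prod>j\<in>e-{i}. s j) * M^(k-1)" by (rule mult.commute)
    thus "(\<Prod>j\<in>e-{i}. cmod (x j)) \<le> M^(k-1) * (\<Prod>j\<in>e-{i}. s j)"
      using term_le[OF e] term_eq[OF e] by linarith
  qed
  have Ri: "R i = \<alpha> * ?d + (1-\<alpha>) * (M^(k-1) * T i) / (s i * M)^(k-1)"
    unfolding R_def using Mpos by (simp add: power_mult_distrib)
  have C': "(1-\<alpha>) * X / (s i * M)^(k-1) \<le> (1-\<alpha>) * (M^(k-1) * T i) / (s i * M)^(k-1)"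
    using C c a1 by (simp add: divide_right_mono mult_left_mono)
  show "cmod lam \<le> R i" using tri A C' Ri by linarith
  assume lb: "cmod lam = B"
  have RB: "R i \<le> B" using R_le i .
  have "(1-\<alpha>) * X / (s i * M)^(k-1) = (1-\<alpha>) * (M^(k-1) * T i) / (s i * M)^(k-1)"
    using tri A C' Ri RB lb by linarith
  hence "(1-\<alpha>) * X = (1-\<alpha>) * (M^(k-1) * T i)" using c
    by (metis divide_cancel_right less_irrefl)
  hence XT: "X = M^(k-1) * T i" using a1 by simp
  show "R i = B \<and> (\<forall>e\<in>E. i \<in> e \<longrightarrow> (\<forall>j\<in>e. cmod (x j) = s j * M))"
  proof (intro conjI ballI impI)
    show "R i = B" using tri A C' Ri RB lb by linarith
    fix e j assume e: "e \<in> E" "i \<in> e" and j: "j \<in> e"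
    show "cmod (x j) = s j * M"
    proof (cases "j = i")
      case True thus ?thesis using xi by simp
    next
      case False
      have "(\<Sum>e\<in>?Ei. \<Prod>j\<in>e-{i}. s j * M) = (\<Sum>e\<in>?Ei. M^(k-1) * (\<Prod>j\<in>e-{i}. s j))"
        by (rule sum.cong[OF refl]) (metis (no_types, lifting) term_eq mult.commute)
      hence sumeq: "(\<Sum>e\<in>?Ei. \<Prod>j\<in>e-{i}. cmod (x j)) = (\<Sum>e\<in>?Ei. \<Prod>j\<in>e-{i}. s j * M)"
        using XT unfolding X_def T_def sum_distrib_left by simp
      have "(\<Prod>j\<in>e-{i}. cmod (x j)) = (\<Prod>j\<in>e-{i}. s j * M)"
        by (rule sum_eq_le_imp_eq[OF finEi _ sumeq]) (use term_le e in auto)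
      thus ?thesis
        by (rule prod_eq_le_imp_eq[rotated 3]) (use efin e j False Mmax elt_lt s_pos Mpos in \<open>auto intro: less_imp_le\<close>)
    qed
  qed
qed

end


context hsetup begin

lemma eig_setup:
  assumes "tensor_eigenvalue n k (A_alpha \<alpha> k E) lam"
  obtains x M i where "\<And>i. i < n \<Longrightarrow> tensor_apply n k (A_alpha \<alpha> k E) x i = lam * x i ^ (k-1)"
    "M > 0" "\<And>j. j < n \<Longrightarrow> cmod (x j) \<le> s j * M" "i < n" "cmod (x i) = s i * M"
proof -
  from assms obtain x i0 where ev: "\<And>i. i < n \<Longrightarrow> tensor_apply n k (A_alpha \<alpha> k E) x i = lam * x i ^ (k-1)"
    and i0: "i0 < n" "x i0 \<noteq> 0" unfolding tensor_eigenvalue_def by blast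
  define M where "M = Max ((\<lambda>j. cmod (x j) / s j) ` {..<n})"
  have ne: "(\<lambda>j. cmod (x j) / s j) ` {..<n} \<noteq> {}" using i0 by auto
  obtain i where i: "i < n" "cmod (x i) / s i = M"
    using Max_in[OF _ ne] unfolding M_def by auto
  have ge: "cmod (x j) / s j \<le> M" if "j < n" for j unfolding M_def
    by (rule Max_ge) (use that in auto)
  have "cmod (x i0) / s i0 > 0" using i0(2) s_pos[of i0] by simp
  hence "M > 0" using ge[OF i0(1)] by linarith
  show ?thesis
  proof (rule that[OF ev \<open>M > 0\<close> _ i(1)])
    show "cmod (x j) \<le> s j * M" if "j < n" for j
      using ge[OF that] s_pos[of j] by (simp add: divide_le_eq mult.commute)
    show "cmod (x i) = s i * M" using i(2) s_pos[of i] by (simp add: field_simps)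
  qed
qed

lemma eig_bound:
  assumes "tensor_eigenvalue n k (A_alpha \<alpha> k E) lam"
  shows "cmod lam \<le> B"
proof -
  obtain x M i where "\<And>i. i < n \<Longrightarrow> tensor_apply n k (A_alpha \<alpha> k E) x i = lam * x i ^ (k-1)"
    "M > 0" "\<And>j. j < n \<Longrightarrow> cmod (x j) \<le> s j * M" "i < n" "cmod (x i) = s i * M"
    using eig_setup[OF assms] by blast
  from gersh_point(1)[OF this] R_le[OF \<open>i < n\<close>] show ?thesis by linarith
qed

lemma eig_all_R:
  assumes ev: "tensor_eigenvalue n k (A_alpha \<alpha> k E) lam" and lb: "cmod lam = B"
    and con: "hconnected {0..<n} E"
  shows "\<And>u. u < n \<Longrightarrow> R u = B"
proof -
  obtain x M i where ev': "\<And>i. i < n \<Longrightarrow> tensor_apply n k (A_alpha \<alpha> k E) x i = lam * x i ^ (k-1)"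
    and Mp: "M > 0" and Mm: "\<And>j. j < n \<Longrightarrow> cmod (x j) \<le> s j * M" and i: "i < n" "cmod (x i) = s i * M"
    using eig_setup[OF ev] by blast
  define S where "S = {j. j < n \<and> cmod (x j) = s j * M}"
  have prp: "j \<in> S" if "l \<in> S" "e \<in> E" "l \<in> e" "j \<in> e" for l e j
  proof -
    have l: "l < n" "cmod (x l) = s l * M" using that(1) unfolding S_def by auto
    have "\<forall>e\<in>E. l \<in> e \<longrightarrow> (\<forall>j\<in>e. cmod (x j) = s j * M)"
      using gersh_point(2)[OF ev' Mp Mm l lb] by (rule conjunct2)
    hence "cmod (x j) = s j * M" using that by blast
    moreover have "j < n" using elt_lt that by blast
    ultimately show ?thesis unfolding S_def by simp
  qed
  fix u assume u: "u < n"
  have "i \<in> {0..<n}" "u \<in> {0..<n}" using i(1) u by auto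
  then obtain vs es where p: "hpath E vs es" "hd vs = i" "last vs = u"
    using con unfolding hconnected_def by blast
  have len: "length vs = length es + 1" and st: "\<And>m. m < length es \<Longrightarrow> es ! m \<in> E \<and> vs ! m \<in> es ! m \<and> vs ! Suc m \<in> es ! m"
    using p(1) unfolding hpath_def hwalk_def by auto
  have "vs ! m \<in> S" if "m < length vs" for m
    using that
  proof (induction m)
    case 0
    have "vs \<noteq> []" using len by auto
    thus ?case using p(2) i hd_conv_nth[of vs] unfolding S_def by auto
  next
    case (Suc m)
    hence m: "m < length es" using len by simp
    have "vs ! m \<in> S" using Suc.IH Suc.prems by simp
    thus ?case using prp[of "vs ! m" "es ! m" "vs ! Suc m"] st[OF m] by blast
  qed
  moreover have "last vs = vs ! (length vs - 1)" using len by (intro last_conv_nth) auto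
  ultimately have "u \<in> S" using p(3) len by auto
  hence "u < n" "cmod (x u) = s u * M" unfolding S_def by auto
  thus "R u = B" using gersh_point(2)[OF ev' Mp Mm _ _ lb] by blast
qed

lemma eig_struct:
  assumes ev: "tensor_eigenvalue n k (A_alpha \<alpha> k E) lam" and lb: "cmod lam = B"
    and con: "hconnected {0..<n} E"
  shows "\<delta> = 1 \<Longrightarrow> \<forall>j<n. real (hdeg E j) = D"
    and "\<delta> > 1 \<Longrightarrow> (\<forall>e\<in>E. w \<in> e) \<and> (\<forall>j<n. j \<noteq> w \<longrightarrow> real (hdeg E j) = D')"
proof -
  have RB: "\<And>u. u < n \<Longrightarrow> R u = B" using eig_all_R[OF ev lb con] .
  show "\<delta> = 1 \<Longrightarrow> \<forall>j<n. real (hdeg E j) = D"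
  proof (intro allI impI)
    fix j assume "\<delta> = 1" "j < n"
    thus "real (hdeg E j) = D" using R_other(3)[OF \<open>j < n\<close> _ RB[OF \<open>j < n\<close>]] dw by (cases "j = w") auto
  qed
  assume dg: "\<delta> > 1"
  show "(\<forall>e\<in>E. w \<in> e) \<and> (\<forall>j<n. j \<noteq> w \<longrightarrow> real (hdeg E j) = D')"
  proof (intro conjI allI impI ballI)
    fix j assume "j < n" "j \<noteq> w"
    thus "real (hdeg E j) = D'" using R_other(2)[OF _ _ RB dg] by blast
  next
    fix e assume e: "e \<in> E"
    have "\<not> e \<subseteq> {w}"
    proof
      assume "e \<subseteq> {w}"
      hence "card e \<le> 1" using card_mono[of "{w}" e] by simp
      thus False using ecard[OF e] k2 by simp
    qed
    then obtain j where j: "j \<in> e" "j \<noteq> w" by auto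
    thus "w \<in> e" using R_other(2)[OF elt_lt[OF e j(1)] j(2) RB[OF elt_lt[OF e j(1)]] dg] e by blast
  qed
qed

end


lemma cont_prod_list: "continuous_on UNIV (\<lambda>z::nat \<Rightarrow> complex. prod_list (map z is))"
  by (induction "is") (auto intro!: continuous_intros continuous_on_mult)

lemma cont_tensor_apply: "continuous_on UNIV (\<lambda>z. tensor_apply n k T z i)"
  unfolding tensor_apply_def
  by (intro continuous_on_sum continuous_on_mult continuous_on_const cont_prod_list)

lemma tensor_apply_cong:
  assumes "\<And>j. j < n \<Longrightarrow> x j = y j"
  shows "tensor_apply n k T x i = tensor_apply n k T y i"
  unfolding tensor_apply_def
proof (rule sum.cong[OF refl])
  fix "is" assume "is \<in> {is. length is = k - 1 \<and> set is \<subseteq> {..<n}}"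
  hence "map x is = map y is" using assms by (auto intro: map_cong)
  thus "T (i # is) * prod_list (map x is) = T (i # is) * prod_list (map y is)" by (simp del: map_eq_conv)
qed

lemma tensor_apply_scale:
  "tensor_apply n k T (\<lambda>j. c * x j) i = c ^ (k-1) * tensor_apply n k T x i"
  unfolding tensor_apply_def sum_distrib_left
proof (rule sum.cong[OF refl])
  fix "is" assume "is \<in> {is. length is = k - 1 \<and> set is \<subseteq> {..<n}}"
  hence l: "length is = k - 1" by simp
  have "prod_list (map (\<lambda>j. c * x j) is) = c ^ length is * prod_list (map x is)"
    by (induction "is") (auto simp: algebra_simps)
  thus "T (i # is) * prod_list (map (\<lambda>j. c * x j) is) = c ^ (k - 1) * (T (i # is) * prod_list (map x is))"
    using l by (simp add: algebra_simps)
qed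

lemma sup_attained:
  fixes T :: "nat list \<Rightarrow> complex"
  assumes bd: "\<And>lam. tensor_eigenvalue n k T lam \<Longrightarrow> cmod lam \<le> Bd"
    and ne: "tensor_eigenvalue n k T lam0"
  shows "\<exists>lam. tensor_eigenvalue n k T lam \<and> cmod lam = tensor_spectral_radius n k T"
    and "\<And>lam. tensor_eigenvalue n k T lam \<Longrightarrow> cmod lam \<le> tensor_spectral_radius n k T"
proof -
  define K :: "(nat \<Rightarrow> complex) set" where
    "K = Pi UNIV (\<lambda>i. if i < n then cball 0 1 else if i = n then cball 0 Bd else {0})"
  have cK: "compact K"
  proof -
    have "compactin (product_topology (\<lambda>_. euclidean) UNIV)
        (Pi\<^sub>E UNIV (\<lambda>i. if i < n then cball (0::complex) 1 else if i = n then cball 0 Bd else {0}))"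
      by (subst compactin_PiE) (auto simp: compactin_euclidean_iff)
    thus ?thesis unfolding K_def euclidean_product_topology PiE_UNIV_domain compactin_euclidean_iff .
  qed
  define C where "C = K \<inter> {z. (\<Sum>i<n. cmod (z i)) = 1}
      \<inter> (\<Inter>i\<in>{..<n}. {z. tensor_apply n k T z i = z n * z i ^ (k-1)})"
  have clC: "closed ({z. (\<Sum>i<n. cmod (z i)) = 1}
      \<inter> (\<Inter>i\<in>{..<n}. {z::nat\<Rightarrow>complex. tensor_apply n k T z i = z n * z i ^ (k-1)}))"
  proof (intro closed_Int closed_INT ballI closed_Collect_eq)
    show "continuous_on UNIV (\<lambda>z::nat\<Rightarrow>complex. \<Sum>i<n. cmod (z i))"
      by (intro continuous_intros continuous_on_norm continuous_on_product_coordinates)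
    fix i
    show "continuous_on UNIV (\<lambda>z. tensor_apply n k T z i)" by (rule cont_tensor_apply)
    show "continuous_on UNIV (\<lambda>z::nat\<Rightarrow>complex. z n * z i ^ (k - 1))"
      by (intro continuous_intros continuous_on_mult continuous_on_power continuous_on_product_coordinates)
  qed (auto intro: continuous_on_const)
  have cC: "compact C" unfolding C_def Int_assoc by (rule compact_Int_closed[OF cK clC])
  have norm: "\<exists>z\<in>C. z n = lam" if ev: "tensor_eigenvalue n k T lam" for lam
  proof -
    from ev obtain x i0 where x: "\<And>i. i < n \<Longrightarrow> tensor_apply n k T x i = lam * x i ^ (k-1)"
      and i0: "i0 < n" "x i0 \<noteq> 0" unfolding tensor_eigenvalue_def by blast
    define c where "c = (\<Sum>i<n. cmod (x i))"
    have cpos: "c > 0" unfolding c_def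
      using member_le_sum[of i0 "{..<n}" "\<lambda>i. cmod (x i)"] i0 by (smt (verit) finite_lessThan lessThan_iff norm_ge_zero zero_less_norm_iff)
    define z where "z i = (if i < n then x i / of_real c else if i = n then lam else 0)" for i
    have "z \<in> K" unfolding K_def
    proof (intro Pi_I)
      fix i
      show "z i \<in> (if i < n then cball 0 1 else if i = n then cball 0 Bd else {0})"
      proof (cases "i < n")
        case True
        have "cmod (x i) \<le> c" unfolding c_def using member_le_sum[of i "{..<n}" "\<lambda>i. cmod (x i)"] True by simp
        thus ?thesis using True cpos by (simp add: z_def norm_divide divide_le_eq)
      qed (auto simp: z_def bd[OF ev])
    qed
    moreover have "(\<Sum>i<n. cmod (z i)) = 1"
    proof -
      have "(\<Sum>i<n. cmod (z i)) = (\<Sum>i<n. cmod (x i) / c)"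
        by (rule sum.cong[OF refl]) (use cpos in \<open>simp add: z_def norm_divide\<close>)
      thus ?thesis using cpos by (simp add: sum_divide_distrib[symmetric] c_def)
    qed
    moreover have "tensor_apply n k T z i = z n * z i ^ (k-1)" if i: "i < n" for i
    proof -
      have "tensor_apply n k T z i = tensor_apply n k T (\<lambda>j. (1 / of_real c) * x j) i"
        by (rule tensor_apply_cong) (simp add: z_def)
      also have "\<dots> = (1 / of_real c) ^ (k-1) * (lam * x i ^ (k-1))"
        unfolding tensor_apply_scale x[OF i] ..
      also have "\<dots> = z n * z i ^ (k-1)" using i by (simp add: z_def power_divide)
      finally show ?thesis .
    qed
    ultimately have "z \<in> C" unfolding C_def by auto
    moreover have "z n = lam" by (simp add: z_def)
    ultimately show ?thesis by blast
  qed
  have Cne: "C \<noteq> {}" using norm[OF ne] by auto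
  have "continuous_on C (\<lambda>z. cmod (z n))"
    by (intro continuous_on_norm continuous_on_subset[OF continuous_on_product_coordinates]) auto
  from compact_attains_sup[OF compact_continuous_image[OF this cC]] Cne
  obtain z0 where z0: "z0 \<in> C" and zmax: "\<And>z. z \<in> C \<Longrightarrow> cmod (z n) \<le> cmod (z0 n)" by auto
  have ev0: "tensor_eigenvalue n k T (z0 n)"
  proof -
    have s: "(\<Sum>i<n. cmod (z0 i)) = 1" and e: "\<And>i. i < n \<Longrightarrow> tensor_apply n k T z0 i = z0 n * z0 i ^ (k-1)"
      using z0 unfolding C_def by auto
    have "\<exists>i<n. z0 i \<noteq> 0"
    proof (rule ccontr)
      assume "\<not> (\<exists>i<n. z0 i \<noteq> 0)"
      hence "(\<Sum>i<n. cmod (z0 i)) = 0" by simp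
      thus False using s by simp
    qed
    thus ?thesis unfolding tensor_eigenvalue_def using e by blast
  qed
  have allle: "cmod lam \<le> cmod (z0 n)" if "tensor_eigenvalue n k T lam" for lam
    using norm[OF that] zmax by auto
  have rho: "tensor_spectral_radius n k T = cmod (z0 n)"
    unfolding tensor_spectral_radius_def
    by (rule cSup_eq_maximum) (use ev0 allle in auto)
  show "\<exists>lam. tensor_eigenvalue n k T lam \<and> cmod lam = tensor_spectral_radius n k T"
    using ev0 rho by auto
  show "\<And>lam. tensor_eigenvalue n k T lam \<Longrightarrow> cmod lam \<le> tensor_spectral_radius n k T"
    using allle rho by simp
qed


lemma eig_exists_k3:
  fixes E :: "nat set set"
  assumes k: "k \<ge> 3" and G: "uniform_hypergraph {0..<n} E k" and n: "n \<ge> 1"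
  shows "\<exists>lam. tensor_eigenvalue n k (A_alpha \<alpha> k E) lam"
proof -
  define x :: "nat \<Rightarrow> complex" where "x j = (if j = 0 then 1 else 0)" for j
  have finE: "finite E" and ck: "\<And>e. e \<in> E \<Longrightarrow> card e = k" and fe: "\<And>e. e \<in> E \<Longrightarrow> finite e"
    using unif_fin[OF G] by auto
  have pz: "(\<Prod>l\<in>e-{j}. x l) = 0" if e: "e \<in> E" for e j
  proof -
    have "card (e - {j}) \<ge> k - 1" using ck[OF e] fe[OF e]
      by (metis card_Diff_singleton_if diff_le_self le_refl)
    hence "card (e - {j} - {0}) \<ge> k - 2" by (metis card_Diff_singleton_if diff_diff_left le_refl
          one_add_one order.trans diff_le_mono diff_le_self)
    hence "card (e - {j} - {0}) > 0" using k by linarith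
    hence "e - {j} - {0} \<noteq> {}" by (metis card.empty less_irrefl)
    then obtain l where "l \<in> e - {j}" "l \<noteq> 0" by auto
    thus ?thesis using fe[OF e] by (intro prod_zero) (auto simp: x_def)
  qed
  have "tensor_apply n k (A_alpha \<alpha> k E) x i = of_real (\<alpha> * real (hdeg E 0)) * x i ^ (k-1)"
    if i: "i < n" for i
  proof -
    have k2: "k \<ge> 2" using k by simp
    have "(\<Sum>e\<in>{e\<in>E. i\<in>e}. \<Prod>j\<in>e-{i}. x j) = 0" using pz by (intro sum.neutral) auto
    moreover have "x i ^ (k-1) = (if i = 0 then 1 else 0)" using k by (simp add: x_def)
    ultimately show ?thesis unfolding tensor_apply_A[OF k2 G i, of \<alpha> x] by (simp add: x_def)
  qed
  moreover have "x 0 \<noteq> 0" by (simp add: x_def)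
  ultimately show ?thesis unfolding tensor_eigenvalue_def using n by force
qed

lemma eig_exists_k2:
  fixes E :: "nat set set" and T :: "nat list \<Rightarrow> complex"
  assumes n: "n \<ge> 1"
  shows "\<exists>lam. tensor_eigenvalue n 2 T lam"
proof -
  define M where "M = mat n n (\<lambda>(i,j). T [i,j])"
  have M: "M \<in> carrier_mat n n" unfolding M_def by simp
  from spectrum_non_empty[OF M] n obtain lam where "eigenvalue M lam"
    unfolding spectrum_def by auto
  then obtain v where v: "v \<in> carrier_vec n" "v \<noteq> 0\<^sub>v n" "M *\<^sub>v v = lam \<cdot>\<^sub>v v"
    unfolding eigenvalue_def eigenvector_def using M by auto
  define x where "x j = v $ j" for j
  have ta: "tensor_apply n 2 T x i = lam * x i ^ (2-1)" if i: "i < n" for i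
  proof -
    have L: "{is. length is = 2 - 1 \<and> set is \<subseteq> {..<n}} = (\<lambda>j. [j]) ` {..<n}"
    proof (intro equalityI subsetI)
      fix "is" assume "is \<in> {is. length is = 2 - 1 \<and> set is \<subseteq> {..<n}}"
      then obtain j where "is = [j]" "j < n" by (auto simp: length_Suc_conv)
      thus "is \<in> (\<lambda>j. [j]) ` {..<n}" by auto
    qed auto
    have "tensor_apply n 2 T x i = (\<Sum>j<n. T [i,j] * x j)"
      unfolding tensor_apply_def L by (subst sum.reindex) (auto simp: inj_on_def)
    also have "\<dots> = (M *\<^sub>v v) $ i"
      using i v(1) by (auto simp: M_def scalar_prod_def x_def intro!: sum.cong)
    also have "\<dots> = lam * x i" using v(3) i v(1) by (simp add: x_def)
    finally show ?thesis by simp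
  qed
  have "\<exists>i<n. x i \<noteq> 0"
  proof (rule ccontr)
    assume "\<not> (\<exists>i<n. x i \<noteq> 0)"
    hence "v = 0\<^sub>v n" using v(1) by (auto simp: x_def)
    thus False using v(2) by simp
  qed
  thus ?thesis unfolding tensor_eigenvalue_def using ta by blast
qed


lemma real_eig:
  fixes E :: "nat set set" and xr :: "nat \<Rightarrow> real"
  assumes k: "k \<ge> 2" and G: "uniform_hypergraph {0..<n} E k"
    and eq: "\<And>i. i < n \<Longrightarrow> \<alpha> * real (hdeg E i) * xr i ^ (k-1)
        + (1-\<alpha>) * (\<Sum>e\<in>{e\<in>E. i\<in>e}. \<Prod>l\<in>e-{i}. xr l) = L * xr i ^ (k-1)"
    and i0: "i0 < n" "xr i0 \<noteq> 0"
  shows "tensor_eigenvalue n k (A_alpha \<alpha> k E) (of_real L)"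
  unfolding tensor_eigenvalue_def
proof (intro exI[of _ "\<lambda>j. of_real (xr j)"] conjI allI impI)
  show "\<exists>i<n. complex_of_real (xr i) \<noteq> 0" using i0 by auto
  fix i assume i: "i < n"
  have "tensor_apply n k (A_alpha \<alpha> k E) (\<lambda>j. of_real (xr j)) i
      = of_real (\<alpha> * real (hdeg E i) * xr i ^ (k-1)
        + (1-\<alpha>) * (\<Sum>e\<in>{e\<in>E. i\<in>e}. \<Prod>l\<in>e-{i}. xr l))"
    unfolding tensor_apply_A[OF k G i] by simp
  also have "\<dots> = of_real L * (of_real (xr i)) ^ (k-1)" unfolding eq[OF i] by simp
  finally show "tensor_apply n k (A_alpha \<alpha> k E) (\<lambda>j. of_real (xr j)) i = of_real L * (of_real (xr i)) ^ (k-1)" .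
qed

lemma iso_deg:
  fixes E :: "nat set set" and f :: "nat \<Rightarrow> 'b"
  assumes inj: "inj_on f {0..<n}" and sub: "\<And>e. e \<in> E \<Longrightarrow> e \<subseteq> {0..<n}" and j: "j < n"
  shows "hdeg E j = hdeg ((\<lambda>e. f ` e) ` E) (f j)"
proof -
  have eq: "{e'\<in>(\<lambda>e. f ` e) ` E. f j \<in> e'} = (\<lambda>e. f ` e) ` {e\<in>E. j\<in>e}"
  proof (intro equalityI subsetI)
    fix e' assume "e' \<in> {e'\<in>(\<lambda>e. f ` e) ` E. f j \<in> e'}"
    then obtain e where e: "e \<in> E" "e' = f ` e" "f j \<in> f ` e" by auto
    hence "j \<in> e" using inj_on_image_mem_iff[OF inj, of j e] sub j by auto
    thus "e' \<in> (\<lambda>e. f ` e) ` {e\<in>E. j\<in>e}" using e by auto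
  qed auto
  have "inj_on (\<lambda>e. f ` e) {e\<in>E. j\<in>e}"
    by (rule inj_on_subset[OF inj_on_image_Pow[OF inj]]) (use sub in auto)
  thus ?thesis unfolding hdeg_def eq by (simp add: card_image)
qed


context hsetup begin

lemma part3_fwd:
  assumes con: "hconnected {0..<n} E" and ev: "tensor_eigenvalue n k (A_alpha \<alpha> k E) lam" and lb: "cmod lam = B"
  shows "hregular {0..<n} E \<or>
              (\<exists>(VH :: nat set) EH v. uniform_hypergraph VH EH (k - 1) \<and> card VH = n - 1 \<and>
                  hregular VH EH \<and> v \<notin> VH \<and>
                  hyp_iso {0..<n} E (insert v VH) {e \<union> {v} | e. e \<in> EH})"
proof (cases "\<delta> = 1")
  case True
  hence "\<forall>j<n. real (hdeg E j) = D" using eig_struct(1)[OF ev lb con] by blast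
  hence "hregular {0..<n} E" unfolding hregular_def by (metis atLeastLessThan_iff of_nat_eq_iff)
  thus ?thesis ..
next
  case False
  hence dg: "\<delta> > 1" using d1 by simp
  have allw: "\<And>e. e \<in> E \<Longrightarrow> w \<in> e" and degs: "\<And>j. j < n \<Longrightarrow> j \<noteq> w \<Longrightarrow> real (hdeg E j) = D'"
    using eig_struct(2)[OF ev lb con dg] by auto
  define VH where "VH = {0..<n} - {w}"
  define EH where "EH = (\<lambda>e. e - {w}) ` E"
  have inj: "inj_on (\<lambda>e. e - {w}) E"
    by (rule inj_onI) (metis allw insert_Diff)
  have deg: "hdeg EH u = hdeg E u" if u: "u \<noteq> w" for u
  proof -
    have "{e\<in>EH. u\<in>e} = (\<lambda>e. e - {w}) ` {e\<in>E. u\<in>e}" unfolding EH_def using u by auto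
    thus ?thesis unfolding hdeg_def using inj_on_subset[OF inj] by (simp add: card_image)
  qed
  have "uniform_hypergraph VH EH (k - 1)" unfolding uniform_hypergraph_def VH_def EH_def
    using esub ecard efin allw by auto
  moreover have "card VH = n - 1" unfolding VH_def using wn by simp
  moreover have "hregular VH EH" unfolding hregular_def VH_def
  proof (intro ballI)
    fix u u' assume "u \<in> {0..<n} - {w}" "u' \<in> {0..<n} - {w}"
    hence "real (hdeg EH u) = D'" "real (hdeg EH u') = D'" using deg degs by auto
    thus "hdeg EH u = hdeg EH u'" by simp
  qed
  moreover have "w \<notin> VH" unfolding VH_def by simp
  moreover have "hyp_iso {0..<n} E (insert w VH) {e \<union> {w} | e. e \<in> EH}"
    unfolding hyp_iso_def
  proof (intro exI[of _ id] conjI)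
    show "bij_betw id {0..<n} (insert w VH)" unfolding VH_def using wn by (auto simp: bij_betw_def)
    show "{e \<union> {w} |e. e \<in> EH} = (\<lambda>e. id ` e) ` E" unfolding EH_def
    proof (intro equalityI subsetI)
      fix x assume "x \<in> {e \<union> {w} |e. e \<in> (\<lambda>e. e - {w}) ` E}"
      then obtain e where "e \<in> E" "x = (e - {w}) \<union> {w}" by auto
      thus "x \<in> (\<lambda>e. id ` e) ` E" using allw by (metis Un_insert_right id_apply image_eqI image_id insert_Diff sup_bot.right_neutral)
    next
      fix x assume "x \<in> (\<lambda>e. id ` e) ` E"
      then obtain e where "e \<in> E" "x = e" by auto
      thus "x \<in> {e \<union> {w} |e. e \<in> (\<lambda>e. e - {w}) ` E}" using allw by blast
    qed
  qed
  ultimately show ?thesis by blast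
qed

lemma B_reg: "\<delta> = 1 \<Longrightarrow> B = D" unfolding B_def by (simp add: algebra_simps)

lemma part3_bwd:
  assumes q: "q < n" "q \<noteq> w" "real (hdeg E q) = D'" and maxw: "\<And>i. i < n \<Longrightarrow> hdeg E i \<le> hdeg E w"
    and d1iff: "\<delta> = 1 \<longleftrightarrow> D = D'" and n2: "n \<ge> 2"
    and H: "hregular {0..<n} E \<or>
              (\<exists>(VH :: nat set) EH v. uniform_hypergraph VH EH (k - 1) \<and> card VH = n - 1 \<and>
                  hregular VH EH \<and> v \<notin> VH \<and>
                  hyp_iso {0..<n} E (insert v VH) {e \<union> {v} | e. e \<in> EH})"
  shows "\<exists>lam. tensor_eigenvalue n k (A_alpha \<alpha> k E) lam \<and> cmod lam = B"
  using H
proof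
  assume reg: "hregular {0..<n} E"
  have alleq: "hdeg E j = hdeg E w" if "j < n" for j
  proof -
    have "j \<in> {0..<n}" "w \<in> {0..<n}" using that wn by auto
    thus ?thesis using reg unfolding hregular_def by blast
  qed
  have "D = D'" using alleq[OF q(1)] q(3) dw by simp
  hence dd: "\<delta> = 1" using d1iff by simp
  have "tensor_eigenvalue n k (A_alpha \<alpha> k E) (of_real D)"
  proof (rule real_eig[OF k2 G _ wn, where xr = "\<lambda>_. 1"])
    fix i assume i: "i < n"
    have "(\<Sum>e\<in>{e\<in>E. i\<in>e}. \<Prod>l\<in>e-{i}. (1::real)) = real (hdeg E i)" by (simp add: hdeg_def)
    thus "\<alpha> * real (hdeg E i) * 1 ^ (k-1) + (1-\<alpha>) * (\<Sum>e\<in>{e\<in>E. i\<in>e}. \<Prod>l\<in>e-{i}. (1::real)) = D * 1 ^ (k-1)"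
      using alleq[OF i] dw by (simp add: algebra_simps)
  next
    show "(\<lambda>_. 1::real) w \<noteq> 0" by simp
  qed
  moreover have "cmod (of_real D) = B" using B_reg[OF dd] dw by simp
  ultimately show ?thesis by blast
next
  assume "\<exists>(VH :: nat set) EH v. uniform_hypergraph VH EH (k - 1) \<and> card VH = n - 1 \<and>
                  hregular VH EH \<and> v \<notin> VH \<and>
                  hyp_iso {0..<n} E (insert v VH) {e \<union> {v} | e. e \<in> EH}"
  then obtain VH :: "nat set" and EH v where H': "uniform_hypergraph VH EH (k - 1) \<and> card VH = n - 1 \<and>
                  hregular VH EH \<and> v \<notin> VH \<and>
                  hyp_iso {0..<n} E (insert v VH) {e \<union> {v} | e. e \<in> EH}" by (elim exE) meson
  have uH: "uniform_hypergraph VH EH (k - 1)" and cV: "card VH = n - 1"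
    and rH: "hregular VH EH" and vV: "v \<notin> VH" and iso: "hyp_iso {0..<n} E (insert v VH) {e \<union> {v} | e. e \<in> EH}"
    using H' by auto
  obtain f where bij: "bij_betw f {0..<n} (insert v VH)"
    and E': "{e \<union> {v} | e. e \<in> EH} = (\<lambda>e. f ` e) ` E"
    using iso unfolding hyp_iso_def by (elim exE conjE) meson
  define E' where "E' = {e \<union> {v} | e. e \<in> EH}"
  have finV: "finite VH" using uH unfolding uniform_hypergraph_def by simp
  have EHsub: "\<And>e. e \<in> EH \<Longrightarrow> e \<subseteq> VH" using uH unfolding uniform_hypergraph_def by simp
  have finEH: "finite EH" using finite_subset[of EH "Pow VH"] EHsub finV by auto
  have inj: "inj_on f {0..<n}" using bij by (simp add: bij_betw_def)
  have img: "f ` {0..<n} = insert v VH" using bij by (simp add: bij_betw_def)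
  have "v \<in> f ` {0..<n}" using img by simp
  then obtain u0 where u0: "u0 < n" "f u0 = v" by auto
  have injv: "inj_on (\<lambda>e. e \<union> {v}) EH"
  proof (rule inj_onI)
    fix a b assume "a \<in> EH" "b \<in> EH" "a \<union> {v} = b \<union> {v}"
    moreover have "v \<notin> a" "v \<notin> b" using EHsub vV \<open>a \<in> EH\<close> \<open>b \<in> EH\<close> by auto
    moreover have "a = (a \<union> {v}) - {v}" "b = (b \<union> {v}) - {v}" using \<open>v \<notin> a\<close> \<open>v \<notin> b\<close> by auto
    ultimately show "a = b" by simp
  qed
  have degE: "hdeg E j = hdeg E' (f j)" if "j < n" for j
    unfolding E'_def E' using iso_deg[OF inj esub that] .
  define m where "m = card EH"
  have dv: "hdeg E' v = m"
  proof -
    have "{e'\<in>E'. v \<in> e'} = (\<lambda>e. e \<union> {v}) ` EH" unfolding E'_def by auto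
    thus ?thesis unfolding hdeg_def m_def using injv by (simp add: card_image)
  qed
  have du: "hdeg E' u = hdeg EH u" if "u \<in> VH" for u
  proof -
    have "u \<noteq> v" using that vV by auto
    hence "{e'\<in>E'. u \<in> e'} = (\<lambda>e. e \<union> {v}) ` {e\<in>EH. u\<in>e}" unfolding E'_def by auto
    thus ?thesis unfolding hdeg_def using inj_on_subset[OF injv] by (simp add: card_image)
  qed
  have fVH: "f j \<in> VH" if "j < n" "j \<noteq> u0" for j
  proof -
    have "f j \<in> insert v VH" using img that by auto
    moreover have "f j \<noteq> v" using inj_on_eq_iff[OF inj, of j u0] that u0 by auto
    ultimately show ?thesis by simp
  qed
  have "VH \<noteq> {}" using cV n2 by auto
  then obtain u1 where u1: "u1 \<in> VH" by auto
  define r where "r = hdeg EH u1"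
  have dj: "hdeg E j = r" if "j < n" "j \<noteq> u0" for j
  proof -
    have "hdeg EH (f j) = hdeg EH u1" using rH fVH[OF that] u1 unfolding hregular_def by blast
    thus ?thesis using degE[OF that(1)] du[OF fVH[OF that]] unfolding r_def by simp
  qed
  have du0: "hdeg E u0 = m" using degE[OF u0(1)] u0(2) dv by simp
  have rm: "r \<le> m" unfolding r_def m_def hdeg_def by (rule card_mono[OF finEH]) auto
  have hw: "hdeg E w = m"
  proof (cases "w = u0")
    case True thus ?thesis using du0 by simp
  next
    case False thus ?thesis using dj[OF wn False] maxw[OF u0(1)] du0 rm by simp
  qed
  have Dm: "D = real m" using hw dw by simp
  have D'r: "D' = real r"
  proof (cases "q = u0")
    case True
    hence "w \<noteq> u0" using q(2) by simp
    hence "r = m" using dj[OF wn] hw by simp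
    thus ?thesis using q(3) True du0 by simp
  next
    case False thus ?thesis using q(3) dj[OF q(1)] by simp
  qed
  have allu0: "u0 \<in> e" if e: "e \<in> E" for e
  proof -
    have "f ` e \<in> E'" unfolding E'_def E' using e by auto
    then obtain e0 where "f ` e = e0 \<union> {v}" unfolding E'_def by auto
    hence "v \<in> f ` e" by auto
    then obtain l where l: "l \<in> e" "f l = v" by auto
    have "l < n" using esub[OF e] l(1) by auto
    hence "l = u0" using inj_on_eq_iff[OF inj, of l u0] u0 l(2) by auto
    thus ?thesis using l by simp
  qed
  define xr where "xr j = (if j = u0 then \<delta> else 1)" for j
  have P: "\<delta>^(k-1) > 0" using d1 by simp
  have "tensor_eigenvalue n k (A_alpha \<alpha> k E) (of_real B)"
  proof (rule real_eig[OF k2 G _ u0(1), where xr = xr])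
    show "xr u0 \<noteq> 0" using d1 by (simp add: xr_def)
    fix i assume i: "i < n"
    show "\<alpha> * real (hdeg E i) * xr i ^ (k-1) + (1-\<alpha>) * (\<Sum>e\<in>{e\<in>E. i\<in>e}. \<Prod>l\<in>e-{i}. xr l) = B * xr i ^ (k-1)"
    proof (cases "i = u0")
      case True
      have "(\<Sum>e\<in>{e\<in>E. i\<in>e}. \<Prod>l\<in>e-{i}. xr l) = (\<Sum>e\<in>{e\<in>E. i\<in>e}. 1)"
        by (rule sum.cong[OF refl], rule prod.neutral) (use True in \<open>auto simp: xr_def\<close>)
      also have "\<dots> = D" using True du0 Dm by (simp add: hdeg_def)
      finally have S: "(\<Sum>e\<in>{e\<in>E. i\<in>e}. \<Prod>l\<in>e-{i}. xr l) = D" .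
      have "B * \<delta>^(k-1) = \<alpha> * D * \<delta>^(k-1) + ((1-\<alpha>) * D / \<delta>^(k-1)) * \<delta>^(k-1)"
        unfolding B_def by (simp add: distrib_right)
      also have "((1-\<alpha>) * D / \<delta>^(k-1)) * \<delta>^(k-1) = (1-\<alpha>) * D" using P by (simp del: power_eq_0_iff)
      finally have "B * \<delta>^(k-1) = \<alpha> * D * \<delta>^(k-1) + (1-\<alpha>) * D" .
      thus ?thesis using True S du0 Dm by (simp add: xr_def)
    next
      case False
      have "(\<Sum>e\<in>{e\<in>E. i\<in>e}. \<Prod>l\<in>e-{i}. xr l) = (\<Sum>e\<in>{e\<in>E. i\<in>e}. \<delta>)"
      proof (rule sum.cong[OF refl])
        fix e assume e: "e \<in> {e\<in>E. i\<in>e}"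
        have fe: "finite (e - {i})" using efin e by auto
        have "u0 \<in> e - {i}" using allu0 e False by auto
        thus "(\<Prod>l\<in>e-{i}. xr l) = \<delta>" unfolding xr_def using prod.delta[OF fe, of u0 "\<lambda>_. \<delta>"] by simp
      qed
      also have "\<dots> = D' * \<delta>" using dj[OF i False] D'r by (simp add: hdeg_def)
      finally have S: "(\<Sum>e\<in>{e\<in>E. i\<in>e}. \<Prod>l\<in>e-{i}. xr l) = D' * \<delta>" .
      have "B = \<alpha> * D' + (1-\<alpha>) * D' * \<delta>" unfolding B_def using key .
      thus ?thesis using False S dj[OF i False] D'r by (simp add: xr_def)
    qed
  qed
  moreover have "B \<ge> 0"
  proof -
    have D0: "D \<ge> 0" using dw by auto
    have "(1-\<alpha>)*D/\<delta>^(k-1) \<ge> 0" using a1 P D0 by (intro divide_nonneg_pos mult_nonneg_nonneg) auto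
    moreover have "\<alpha> * D \<ge> 0" using a0 D0 by simp
    ultimately show ?thesis unfolding B_def by linarith
  qed
  ultimately show ?thesis by (intro exI[of _ "of_real B"]) simp
qed

end


theorem theorem3p1:
  fixes n k :: nat and E :: "nat set set" and \<alpha> \<delta> :: real
  assumes hk: "k \<ge> 2" and hn: "n \<ge> 2"
    and hG: "uniform_hypergraph {0..<n} E k"
    and h\<alpha>: "0 \<le> \<alpha>" "\<alpha> < 1"
  defines "\<Delta> \<equiv> real (sorted_degrees n E ! 0)"
    and "\<Delta>' \<equiv> real (sorted_degrees n E ! 1)"
  assumes h\<Delta>': "\<Delta>' \<ge> 1"
    and h\<delta>0: "\<alpha> = 0 \<Longrightarrow> \<delta> = (\<Delta> / \<Delta>') powr (1 / real k)"
    and h\<delta>1: "0 < \<alpha> \<Longrightarrow> \<Delta> = \<Delta>' \<Longrightarrow> \<delta> = 1"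
    and h\<delta>2: "0 < \<alpha> \<Longrightarrow> \<Delta> > \<Delta>' \<Longrightarrow> \<delta> > (\<Delta> / \<Delta>') powr (1 / real k) \<and> hpoly \<alpha> k \<Delta> \<Delta>' \<delta> = 0"
  shows "(0 < \<alpha> \<and> \<Delta> > \<Delta>' \<longrightarrow> (\<exists>t. t > (\<Delta> / \<Delta>') powr (1 / real k) \<and> hpoly \<alpha> k \<Delta> \<Delta>' t = 0))
       \<and> rho_alpha \<alpha> n k E \<le> \<alpha> * \<Delta> + (1 - \<alpha>) * \<Delta> / \<delta> ^ (k - 1)
       \<and> (hconnected {0..<n} E \<longrightarrow>
           (rho_alpha \<alpha> n k E = \<alpha> * \<Delta> + (1 - \<alpha>) * \<Delta> / \<delta> ^ (k - 1) \<longleftrightarrow>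
              hregular {0..<n} E \<or>
              (\<exists>(VH :: nat set) EH v. uniform_hypergraph VH EH (k - 1) \<and> card VH = n - 1 \<and>
                  hregular VH EH \<and> v \<notin> VH \<and>
                  hyp_iso {0..<n} E (insert v VH) {e \<union> {v} | e. e \<in> EH})))"
proof -
  obtain p q where pq: "p < n" "q < n" "p \<noteq> q" "hdeg E p = sorted_degrees n E ! 0"
     "hdeg E q = sorted_degrees n E ! 1"
     "\<And>i. i<n \<Longrightarrow> hdeg E i \<le> sorted_degrees n E ! 0"
     "\<And>i. i<n \<Longrightarrow> i \<noteq> p \<Longrightarrow> hdeg E i \<le> sorted_degrees n E ! 1"
    using degree_facts[OF hn, of E] by blast
  have Dp: "real (hdeg E p) = \<Delta>" and Dq: "real (hdeg E q) = \<Delta>'" using pq unfolding \<Delta>_def \<Delta>'_def by auto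
  have DD: "\<Delta>' \<le> \<Delta>" using pq(6)[OF pq(2)] unfolding \<Delta>_def \<Delta>'_def pq(5)[symmetric] by simp
  have D'pos: "\<Delta>' > 0" using h\<Delta>' by simp
  define r where "r = \<Delta> / \<Delta>'"
  have r1: "r \<ge> 1" unfolding r_def using DD D'pos by simp
  have rk: "(r powr (1 / real k)) ^ k = r" and rk1: "r powr (1 / real k) \<ge> 1"
  proof -
    have "(r powr (1 / real k)) ^ k = (r powr (1 / real k)) powr real k"
      using r1 by (simp add: powr_realpow)
    also have "\<dots> = r" using hk r1 by (simp add: powr_powr)
    finally show "(r powr (1 / real k)) ^ k = r" .
    show "r powr (1 / real k) \<ge> 1" using r1 by (simp add: ge_one_powr_ge_zero)
  qed
  have dfacts: "\<delta> \<ge> 1 \<and> hpoly \<alpha> k \<Delta> \<Delta>' \<delta> = 0"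
  proof (cases "\<alpha> = 0")
    case True
    hence d: "\<delta> = r powr (1 / real k)" using h\<delta>0 r_def by simp
    have "hpoly \<alpha> k \<Delta> \<Delta>' \<delta> = \<Delta>' * r - \<Delta>" unfolding hpoly_def d rk using True by simp
    also have "\<dots> = 0" unfolding r_def using D'pos by simp
    finally show ?thesis using d rk1 by simp
  next
    case False
    hence a: "\<alpha> > 0" using h\<alpha> by simp
    show ?thesis
    proof (cases "\<Delta> = \<Delta>'")
      case True thus ?thesis using h\<delta>1[OF a True] by (simp add: hpoly_def)
    next
      case False
      hence "\<Delta> > \<Delta>'" using DD by simp
      thus ?thesis using h\<delta>2[OF a] rk1 unfolding r_def by force
    qed
  qed
  have d1: "\<delta> \<ge> 1" using dfacts by simp
  have dpos: "\<delta> > 0" using d1 by simp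
  have key: "\<alpha>*\<Delta> + (1-\<alpha>)*\<Delta>/\<delta>^(k-1) = \<alpha>*\<Delta>' + (1-\<alpha>)*\<Delta>'*\<delta>"
  proof -
    have pk: "\<delta>^k = \<delta> * \<delta>^(k-1)" using hk by (metis Suc_diff_1 not_numeral_le_zero not_gr0 power_Suc)
    have hp: "(1 - \<alpha>) * \<Delta>' * \<delta> ^ k + \<alpha> * (\<Delta>' - \<Delta>) * \<delta> ^ (k - 1) - (1 - \<alpha>) * \<Delta> = 0"
      using dfacts unfolding hpoly_def by simp
    have c: "\<delta>^(k-1) > 0" using dpos by simp
    define P where "P = \<delta>^(k-1)"
    have cP: "P > 0" using c P_def by simp
    have hp': "(1 - \<alpha>) * \<Delta>' * (\<delta> * P) + \<alpha> * (\<Delta>' - \<Delta>) * P - (1 - \<alpha>) * \<Delta> = 0"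
      using hp unfolding pk P_def .
    have e1: "(\<alpha>*\<Delta> + (1-\<alpha>)*\<Delta>/P)*P = \<alpha>*\<Delta>*P + (1-\<alpha>)*\<Delta>" using cP by (simp add: field_simps)
    have e2: "(\<alpha>*\<Delta>' + (1-\<alpha>)*\<Delta>'*\<delta>)*P = \<alpha>*\<Delta>'*P + (1-\<alpha>)*\<Delta>'*(\<delta>*P)" by (simp add: algebra_simps)
    have "\<alpha>*\<Delta>*P + (1-\<alpha>)*\<Delta> = \<alpha>*\<Delta>'*P + (1-\<alpha>)*\<Delta>'*(\<delta>*P)" using hp' by (simp add: algebra_simps)
    hence "(\<alpha>*\<Delta> + (1-\<alpha>)*\<Delta>/P)*P = (\<alpha>*\<Delta>' + (1-\<alpha>)*\<Delta>'*\<delta>)*P" using e1 e2 by simp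
    hence "(\<alpha>*\<Delta> + (1-\<alpha>)*\<Delta>/\<delta>^(k-1)) * \<delta>^(k-1) = (\<alpha>*\<Delta>' + (1-\<alpha>)*\<Delta>'*\<delta>) * \<delta>^(k-1)"
      unfolding P_def .
    thus ?thesis using c dpos by auto
  qed
  interpret H: hsetup n k E \<alpha> \<Delta> \<Delta>' \<delta> p
    by unfold_locales (use hk hG h\<alpha> pq Dp h\<Delta>' d1 DD key \<Delta>'_def in auto)
  have Bdef: "H.B = \<alpha> * \<Delta> + (1 - \<alpha>) * \<Delta> / \<delta> ^ (k - 1)" unfolding H.B_def ..
  have rho: "rho_alpha \<alpha> n k E = tensor_spectral_radius n k (A_alpha \<alpha> k E)" unfolding rho_alpha_def ..
  obtain lam0 where lam0: "tensor_eigenvalue n k (A_alpha \<alpha> k E) lam0"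
  proof (cases "k = 2")
    case True thus ?thesis using eig_exists_k2[of n "A_alpha \<alpha> k E"] hn that by auto
  next
    case False thus ?thesis using eig_exists_k3[OF _ hG, of \<alpha>] hn hk that by auto
  qed
  have bdd: "\<And>lam. tensor_eigenvalue n k (A_alpha \<alpha> k E) lam \<Longrightarrow> cmod lam \<le> H.B"
    using H.eig_bound by blast
  obtain lamM where lamM: "tensor_eigenvalue n k (A_alpha \<alpha> k E) lamM"
    "cmod lamM = rho_alpha \<alpha> n k E" using sup_attained(1)[of n k "A_alpha \<alpha> k E" H.B lam0] bdd lam0 rho by auto
  have ub: "rho_alpha \<alpha> n k E \<le> H.B" using H.eig_bound[OF lamM(1)] lamM(2) by simp
  have attain: "rho_alpha \<alpha> n k E = H.B" if "tensor_eigenvalue n k (A_alpha \<alpha> k E) lam" "cmod lam = H.B" for lam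
  proof -
    have "cmod lam \<le> tensor_spectral_radius n k (A_alpha \<alpha> k E)"
      using sup_attained(2)[of n k "A_alpha \<alpha> k E" H.B lam0 lam] bdd lam0 that(1) by blast
    thus ?thesis using that(2) ub rho by simp
  qed
  have part3: "hconnected {0..<n} E \<longrightarrow>
           (rho_alpha \<alpha> n k E = H.B \<longleftrightarrow>
              hregular {0..<n} E \<or>
              (\<exists>(VH :: nat set) EH v. uniform_hypergraph VH EH (k - 1) \<and> card VH = n - 1 \<and>
                  hregular VH EH \<and> v \<notin> VH \<and>
                  hyp_iso {0..<n} E (insert v VH) {e \<union> {v} | e. e \<in> EH}))"
  proof
    assume con: "hconnected {0..<n} E"
    have maxw: "\<And>i. i < n \<Longrightarrow> hdeg E i \<le> hdeg E p" using pq(6) pq(4) by simp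
    have d1iff: "\<delta> = 1 \<longleftrightarrow> \<Delta> = \<Delta>'"
    proof
      assume "\<delta> = 1"
      show "\<Delta> = \<Delta>'"
      proof (rule ccontr)
        assume "\<Delta> \<noteq> \<Delta>'"
        hence gt: "\<Delta> > \<Delta>'" using DD by simp
        hence "r > 1" unfolding r_def using D'pos by simp
        hence rg: "r powr (1 / real k) > 1" using hk by simp
        show False
        proof (cases "\<alpha> = 0")
          case True thus False using h\<delta>0 rg \<open>\<delta> = 1\<close> r_def by simp
        next
          case False hence "\<alpha> > 0" using h\<alpha> by simp
          thus False using h\<delta>2 gt rg \<open>\<delta> = 1\<close> r_def by fastforce
        qed
      qed
    next
      assume eq: "\<Delta> = \<Delta>'"
      show "\<delta> = 1"
      proof (cases "\<alpha> = 0")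
        case True
        have "r = 1" unfolding r_def eq using D'pos by simp
        thus ?thesis using h\<delta>0[OF True] r_def by simp
      next
        case False hence "\<alpha> > 0" using h\<alpha> by simp
        thus ?thesis using h\<delta>1 eq by simp
      qed
    qed
    show "rho_alpha \<alpha> n k E = H.B \<longleftrightarrow>
              hregular {0..<n} E \<or>
              (\<exists>(VH :: nat set) EH v. uniform_hypergraph VH EH (k - 1) \<and> card VH = n - 1 \<and>
                  hregular VH EH \<and> v \<notin> VH \<and>
                  hyp_iso {0..<n} E (insert v VH) {e \<union> {v} | e. e \<in> EH})"
    proof
      assume "rho_alpha \<alpha> n k E = H.B"
      hence "cmod lamM = H.B" using lamM(2) by simp
      thus "hregular {0..<n} E \<or>
              (\<exists>(VH :: nat set) EH v. uniform_hypergraph VH EH (k - 1) \<and> card VH = n - 1 \<and>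
                  hregular VH EH \<and> v \<notin> VH \<and>
                  hyp_iso {0..<n} E (insert v VH) {e \<union> {v} | e. e \<in> EH})"
        using H.part3_fwd[OF con lamM(1)] by blast
    next
      assume "hregular {0..<n} E \<or>
              (\<exists>(VH :: nat set) EH v. uniform_hypergraph VH EH (k - 1) \<and> card VH = n - 1 \<and>
                  hregular VH EH \<and> v \<notin> VH \<and>
                  hyp_iso {0..<n} E (insert v VH) {e \<union> {v} | e. e \<in> EH})"
      from H.part3_bwd[OF pq(2) pq(3)[symmetric] Dq maxw d1iff hn this]
      obtain lam where "tensor_eigenvalue n k (A_alpha \<alpha> k E) lam" "cmod lam = H.B" by blast
      thus "rho_alpha \<alpha> n k E = H.B" by (rule attain)
    qed
  qed
  show ?thesis
  proof (intro conjI)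
    show "0 < \<alpha> \<and> \<Delta> > \<Delta>' \<longrightarrow> (\<exists>t. t > (\<Delta> / \<Delta>') powr (1 / real k) \<and> hpoly \<alpha> k \<Delta> \<Delta>' t = 0)"
      using h\<delta>2 by blast
    show "rho_alpha \<alpha> n k E \<le> \<alpha> * \<Delta> + (1 - \<alpha>) * \<Delta> / \<delta> ^ (k - 1)" using ub Bdef by simp
    show "hconnected {0..<n} E \<longrightarrow>
           (rho_alpha \<alpha> n k E = \<alpha> * \<Delta> + (1 - \<alpha>) * \<Delta> / \<delta> ^ (k - 1) \<longleftrightarrow>
              hregular {0..<n} E \<or>
              (\<exists>(VH :: nat set) EH v. uniform_hypergraph VH EH (k - 1) \<and> card VH = n - 1 \<and>
                  hregular VH EH \<and> v \<notin> VH \<and>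
                  hyp_iso {0..<n} E (insert v VH) {e \<union> {v} | e. e \<in> EH}))"
      using part3 Bdef by simp
  qed
qed


end
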